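(* Let $A$ be a finitely generated algebra over $B=\bigoplus_{s=1}^K\Bbbk e_s$, let $\alpha\in\mathbb N^K$, $N=\sum_s\alpha_s$, $R=\mathcal O(\operatorname{Rep}(A,\alpha))$, and let $Q\in(D_BA)_n$ with associated differential $n$-bracket $\{\!\{-,\ldots,-\}\!\}=\{\!\{-,\ldots,-\}\!\}_Q$. For $x=x^1\otimes\cdots\otimes x^n\in A^{\otimes n}$ set $x_{(u_1v_1,\ldots,u_nv_n)}=x^1_{u_1v_1}\cdots x^n_{u_nv_n}\in R$ (extended linearly). Let $S_{n-1}$ act on $\{2,\ldots,n\}$, extended by $\tilde\sigma(1)=1$. Then for all $a^1,\ldots,a^n\in A$ and indices $u_q,v_q\in\{1,\ldots,N\}$, $$\operatorname{tr}\mathcal X(Q)\big(a^1_{u_1v_1},\ldots,a^n_{u_nv_n}\big)=\sum_{\tilde\sigma\in S_{n-1}}\epsilon(\tilde\sigma)\,\{\!\{a^1,a^{\tilde\sigma(2)},\ldots,a^{\tilde\sigma(n)}\}\!\}_{\tilde\sigma(u,v)},$$ where $\tilde\sigma(u,v)=(u_{\tilde\sigma(n)}v_1,\,u_1v_{\tilde\sigma(2)},\,u_{\tilde\sigma(2)}v_{\tilde\sigma(3)},\ldots,u_{\tilde\sigma(n-1)}v_{\tilde\sigma(n)})$ and $\epsilon(\tilde\sigma)$ is the sign of $\tilde\sigma$.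
   Context: $\Bbbk$ field of characteristic $0$, $\otimes=\otimes_\Bbbk$, $e_se_t=\delta_{st}e_s$, $\sum e_s=1$. Representation space: $R$ is the commutative $\Bbbk$-algebra generated by symbols $a_{ij}$ ($a\in A$, $1\le i,j\le N$) with $(a+b)_{ij}=a_{ij}+b_{ij}$, $(ab)_{ij}=\sum_ka_{ik}b_{kj}$, and $(e_s)_{ij}=\delta_{ij}$ if $\alpha_1+\cdots+\alpha_{s-1}<i,j\le\alpha_1+\cdots+\alpha_s$, $0$ otherwise. $D_{A/B}=\operatorname{Der}_B(A,A\otimes A)$ for the outer structure $x(d'\otimes d'')y=xd'\otimes d''y$, with bimodule structure $(b\delta c)(a)=\delta(a)'c\otimes b\delta(a)''$; $D_BA=T_AD_{A/B}$. For $\delta\in D_{A/B}$, $\delta_{ij}\in\operatorname{Der}(R)$ is defined by $\delta_{ij}(b_{kl})=\delta(b)'_{kj}\delta(b)''_{il}$, and $\mathcal X(\delta)$ is the matrix $(\delta_{ij})$; for $Q=\delta_1\cdots\delta_n$, $\mathcal X(Q)=\mathcal X(\delta_1)\cdots\mathcal X(\delta_n)$ (matrix product with entries multiplied by $\wedge$ in $\bigwedge^n_R\operatorname{Der}(R)$), $\operatorname{tr}\mathcal X(Q)=\sum_i(\mathcal X(Q))_{ii}$, extended linearly. Polyvector fields are evaluated by $(\xi_1\wedge\cdots\wedge\xi_n)(f_1,\ldots,f_n)=\sum_{\sigma\in S_n}\epsilon(\sigma)\xi_1(f_{\sigma(1)})\cdots\xi_n(f_{\sigma(n)})$. With $\tau_\sigma(a_1\otimes\cdots\otimes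 a_n)=a_{\sigma^{-1}(1)}\otimes\cdots\otimes a_{\sigma^{-1}(n)}$, for $Q=\delta_1\cdots\delta_n$ the $n$-bracket is $\{\!\{-,\ldots,-\}\!\}_Q=\sum_{i=0}^{n-1}(-1)^{(n-1)i}\tau^i_{(1\ldots n)}\circ\widetilde{\{\!\{\}\!\}}_Q\circ\tau^{-i}_{(1\ldots n)}$ with $\widetilde{\{\!\{a_1,\ldots,a_n\}\!\}}_Q=\delta_n(a_n)'\delta_1(a_1)''\otimes\delta_1(a_1)'\delta_2(a_2)''\otimes\cdots\otimes\delta_{n-1}(a_{n-1})'\delta_n(a_n)''$, extended linearly in $Q$. *)

theory Defs
  imports Main "HOL-Library.FuncSet" "HOL-Combinatorics.Permutations"
begin

definition k_algebra :: "('k::field \<Rightarrow> 'a::ring_1) \<Rightarrow> bool" where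
  "k_algebra j \<longleftrightarrow>
     (\<forall>c d. j (c + d) = j c + j d) \<and> (\<forall>c d. j (c * d) = j c * j d) \<and> j 1 = 1 \<and>
     (\<forall>c a. j c * a = a * j c)"

text \<open>Complete system of orthogonal idempotents e_1,...,e_K (the image of
B = k e_1 + ... + k e_K in A).\<close>

definition idempotent_system :: "nat \<Rightarrow> (nat \<Rightarrow> 'a::ring_1) \<Rightarrow> bool" where
  "idempotent_system K e \<longleftrightarrow>
     (\<forall>s\<in>{1..K}. \<forall>t\<in>{1..K}. e s * e t = (if s = t then e s else 0)) \<and>
     (\<Sum>s\<in>{1..K}. e s) = 1"

inductive_set subalg_gen :: "('k::field \<Rightarrow> 'a::ring_1) \<Rightarrow> nat \<Rightarrow> (nat \<Rightarrow> 'a) \<Rightarrow> 'a set \<Rightarrow> 'a set"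
  for j K e G where
    gen: "g \<in> G \<Longrightarrow> g \<in> subalg_gen j K e G"
  | scal: "j c \<in> subalg_gen j K e G"
  | idem: "s \<in> {1..K} \<Longrightarrow> e s \<in> subalg_gen j K e G"
  | add: "x \<in> subalg_gen j K e G \<Longrightarrow> y \<in> subalg_gen j K e G \<Longrightarrow> x + y \<in> subalg_gen j K e G"
  | mult: "x \<in> subalg_gen j K e G \<Longrightarrow> y \<in> subalg_gen j K e G \<Longrightarrow> x * y \<in> subalg_gen j K e G"

definition finitely_generated_over_B :: "('k::field \<Rightarrow> 'a::ring_1) \<Rightarrow> nat \<Rightarrow> (nat \<Rightarrow> 'a) \<Rightarrow> bool" where
  "finitely_generated_over_B j K e \<longleftrightarrow> (\<exists>G. finite G \<and> subalg_gen j K e G = UNIV)"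

section \<open>Representation space (functor of points)\<close>

definition ring_hom_k :: "('k::field \<Rightarrow> 'r::comm_ring_1) \<Rightarrow> bool" where
  "ring_hom_k \<iota> \<longleftrightarrow> (\<forall>c d. \<iota> (c + d) = \<iota> c + \<iota> d) \<and> (\<forall>c d. \<iota> (c * d) = \<iota> c * \<iota> d) \<and> \<iota> 1 = 1"

definition blk_off :: "(nat \<Rightarrow> nat) \<Rightarrow> nat \<Rightarrow> nat" where
  "blk_off \<alpha> s = (\<Sum>t\<in>{1..<s}. \<alpha> t)"

text \<open>rho a i j plays the role of the coordinate a_ij; the defining relations of
O(Rep(A,alpha)) hold (indices in 1..N, N = sum of the alpha_s).\<close>

definition is_rep ::
  "('k::field \<Rightarrow> 'a::ring_1) \<Rightarrow> nat \<Rightarrow> (nat \<Rightarrow> 'a) \<Rightarrow> (nat \<Rightarrow> nat) \<Rightarrow>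
   ('k \<Rightarrow> 'r::comm_ring_1) \<Rightarrow> ('a \<Rightarrow> nat \<Rightarrow> nat \<Rightarrow> 'r) \<Rightarrow> bool" where
  "is_rep j K e \<alpha> \<iota> \<rho> \<longleftrightarrow>
     (let N = (\<Sum>s\<in>{1..K}. \<alpha> s) in
     (\<forall>a b. \<forall>i\<in>{1..N}. \<forall>l\<in>{1..N}. \<rho> (a + b) i l = \<rho> a i l + \<rho> b i l) \<and>
     (\<forall>a b. \<forall>i\<in>{1..N}. \<forall>l\<in>{1..N}. \<rho> (a * b) i l = (\<Sum>m\<in>{1..N}. \<rho> a i m * \<rho> b m l)) \<and>
     (\<forall>c a. \<forall>i\<in>{1..N}. \<forall>l\<in>{1..N}. \<rho> (j c * a) i l = \<iota> c * \<rho> a i l) \<and>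
     (\<forall>s\<in>{1..K}. \<forall>i\<in>{1..N}. \<forall>l\<in>{1..N}.
        \<rho> (e s) i l = (if i = l \<and> blk_off \<alpha> s < i \<and> i \<le> blk_off \<alpha> s + \<alpha> s then 1 else 0)))"

text \<open>An element of A \<otimes> A is represented by a finite formal sum of simple tensors
x \<otimes> y (a list of pairs). Two representatives denote the same tensor iff they agree
under all k-bilinear forms f(x)g(y) with f, g k-linear functionals (valid since k is a field).\<close>

definition k_linear_fun :: "('k::field \<Rightarrow> 'a::ring_1) \<Rightarrow> ('a \<Rightarrow> 'k) \<Rightarrow> bool" where
  "k_linear_fun j f \<longleftrightarrow> (\<forall>a b. f (a + b) = f a + f b) \<and> (\<forall>c a. f (j c * a) = c * f a)"

definition teq2 :: "('k::field \<Rightarrow> 'a::ring_1) \<Rightarrow> ('a \<times> 'a) list \<Rightarrow> ('a \<times> 'a) list \<Rightarrow> bool" where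
  "teq2 j xs ys \<longleftrightarrow>
     (\<forall>f g. k_linear_fun j f \<longrightarrow> k_linear_fun j g \<longrightarrow>
        (\<Sum>(x, y)\<leftarrow>xs. f x * g y) = (\<Sum>(x, y)\<leftarrow>ys. f x * g y))"

definition tmul_left :: "'a::ring_1 \<Rightarrow> ('a \<times> 'a) list \<Rightarrow> ('a \<times> 'a) list" where
  "tmul_left a xs = map (\<lambda>(x, y). (a * x, y)) xs"

definition tmul_right :: "('a::ring_1 \<times> 'a) list \<Rightarrow> 'a \<Rightarrow> ('a \<times> 'a) list" where
  "tmul_right xs b = map (\<lambda>(x, y). (x, y * b)) xs"

text \<open>delta is an element of D_{A/B} = Der_B(A, A \<otimes> A) (outer structure): additive,
k-linear, Leibniz rule, and vanishing on B.\<close>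

definition double_der ::
  "('k::field \<Rightarrow> 'a::ring_1) \<Rightarrow> nat \<Rightarrow> (nat \<Rightarrow> 'a) \<Rightarrow> ('a \<Rightarrow> ('a \<times> 'a) list) \<Rightarrow> bool" where
  "double_der j K e \<delta> \<longleftrightarrow>
     (\<forall>a b. teq2 j (\<delta> (a + b)) (\<delta> a @ \<delta> b)) \<and>
     (\<forall>c a. teq2 j (\<delta> (j c * a)) (tmul_left (j c) (\<delta> a))) \<and>
     (\<forall>a b. teq2 j (\<delta> (a * b)) (tmul_right (\<delta> a) b @ tmul_left a (\<delta> b))) \<and>
     (\<forall>c. teq2 j (\<delta> (\<Sum>s\<in>{1..K}. j (c s) * e s)) [])"

text \<open>delta_ij (b_kl) = delta(b)'_kj delta(b)''_il.\<close>

definition vf :: "('a \<Rightarrow> nat \<Rightarrow> nat \<Rightarrow> 'r::comm_ring_1) \<Rightarrow> ('a \<Rightarrow> ('a \<times> 'a) list) \<Rightarrow>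
                 nat \<Rightarrow> nat \<Rightarrow> 'a \<Rightarrow> nat \<Rightarrow> nat \<Rightarrow> 'r" where
  "vf \<rho> \<delta> i j b k l = (\<Sum>(x, y)\<leftarrow>\<delta> b. \<rho> x k j * \<rho> y i l)"

text \<open>For Q = delta_1 ... delta_n (ds q = delta_q, q = 1..n):
tr X(Q) = sum over I_0 = I_n, I_1,...,I_(n-1) in 1..N of
(delta_1)_{I_0 I_1} \<and> ... \<and> (delta_n)_{I_(n-1) I_n}, evaluated on
(f_1,...,f_n), f_q = a^q_{u_q v_q}, by
(xi_1 \<and> ... \<and> xi_n)(f_1..f_n) = sum_sigma sign(sigma) xi_1(f_sigma(1)) ... xi_n(f_sigma(n)).\<close>

definition trX_eval_mono ::
  "('a \<Rightarrow> nat \<Rightarrow> nat \<Rightarrow> 'r::comm_ring_1) \<Rightarrow> nat \<Rightarrow> nat \<Rightarrow> (nat \<Rightarrow> ('a \<Rightarrow> ('a \<times> 'a) list)) \<Rightarrow>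
   (nat \<Rightarrow> 'a) \<Rightarrow> (nat \<Rightarrow> nat) \<Rightarrow> (nat \<Rightarrow> nat) \<Rightarrow> 'r" where
  "trX_eval_mono \<rho> N n ds a u v =
     (\<Sum>I\<in>{I \<in> {0..n} \<rightarrow>\<^sub>E {1..N}. I 0 = I n}.
        \<Sum>\<sigma>\<in>{\<sigma>. \<sigma> permutes {1..n}}.
          of_int (sign \<sigma>) * (\<Prod>q\<in>{1..n}. vf \<rho> (ds q) (I (q - 1)) (I q) (a (\<sigma> q)) (u (\<sigma> q)) (v (\<sigma> q))))"

text \<open>Q in (D_B A)_n as a finite sum of monomials delta_1 ... delta_n; extended linearly.\<close>

definition trX_eval ::
  "('a \<Rightarrow> nat \<Rightarrow> nat \<Rightarrow> 'r::comm_ring_1) \<Rightarrow> nat \<Rightarrow> nat \<Rightarrow> (nat \<Rightarrow> ('a \<Rightarrow> ('a \<times> 'a) list)) list \<Rightarrow>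
   (nat \<Rightarrow> 'a) \<Rightarrow> (nat \<Rightarrow> nat) \<Rightarrow> (nat \<Rightarrow> nat) \<Rightarrow> 'r" where
  "trX_eval \<rho> N n Q a u v = (\<Sum>ds\<leftarrow>Q. trX_eval_mono \<rho> N n ds a u v)"

text \<open>Elements of A^{\<otimes> n}: formal sums of signed simple tensors x^1 \<otimes> ... \<otimes> x^n
(factor q is x q, q = 1..n).\<close>

type_synonym 'a tensn = "(int \<times> (nat \<Rightarrow> 'a)) list"

definition cyc :: "nat \<Rightarrow> nat \<Rightarrow> nat" where
  "cyc n q = (if 1 \<le> q \<and> q < n then q + 1 else if q = n \<and> 1 \<le> n then 1 else q)"

definition tau :: "(nat \<Rightarrow> nat) \<Rightarrow> 'a tensn \<Rightarrow> 'a tensn" where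
  "tau \<sigma> X = map (\<lambda>(c, x). (c, \<lambda>q. x (inv \<sigma> q))) X"

text \<open>tilde-bracket on a simple tensor b^1 \<otimes> ... \<otimes> b^n:
delta_n(b_n)' delta_1(b_1)'' \<otimes> delta_1(b_1)' delta_2(b_2)'' \<otimes> ... \<otimes> delta_(n-1)(b_(n-1))' delta_n(b_n)''
(expanded over all choices of summands of the delta_q(b_q)).\<close>

definition bracket_tilde :: "nat \<Rightarrow> (nat \<Rightarrow> ('a::ring_1 \<Rightarrow> ('a \<times> 'a) list)) \<Rightarrow> (nat \<Rightarrow> 'a) \<Rightarrow> 'a tensn" where
  "bracket_tilde n ds b =
     map (\<lambda>ts. (1, \<lambda>q. if q = 1 then fst (ts ! (n - 1)) * snd (ts ! 0)
                        else fst (ts ! (q - 2)) * snd (ts ! (q - 1))))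
       (product_lists (map (\<lambda>q. ds q (b q)) [1..<n + 1]))"

definition tau_args :: "(nat \<Rightarrow> nat) \<Rightarrow> (nat \<Rightarrow> 'a) \<Rightarrow> (nat \<Rightarrow> 'a)" where
  "tau_args \<sigma> b = (\<lambda>q. b (inv \<sigma> q))"

text \<open>{{-,...,-}}_Q = sum_{i=0}^{n-1} (-1)^{(n-1)i} tau^i \<circ> tilde \<circ> tau^{-i},
tau = tau_{(1...n)}, so tau^i = tau_{c^i} and tau^{-i} = tau_{(c^i)^-1}.\<close>

definition bracket_mono :: "nat \<Rightarrow> (nat \<Rightarrow> ('a::ring_1 \<Rightarrow> ('a \<times> 'a) list)) \<Rightarrow> (nat \<Rightarrow> 'a) \<Rightarrow> 'a tensn" where
  "bracket_mono n ds b =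
     concat (map (\<lambda>i. map (\<lambda>(c, x). ((-1) ^ ((n - 1) * i) * c, x))
                      (tau (cyc n ^^ i) (bracket_tilde n ds (tau_args (inv (cyc n ^^ i)) b))))
             [0..<n])"

definition bracket :: "nat \<Rightarrow> (nat \<Rightarrow> ('a::ring_1 \<Rightarrow> ('a \<times> 'a) list)) list \<Rightarrow> (nat \<Rightarrow> 'a) \<Rightarrow> 'a tensn" where
  "bracket n Q b = concat (map (\<lambda>ds. bracket_mono n ds b) Q)"

definition tens_eval :: "('a \<Rightarrow> nat \<Rightarrow> nat \<Rightarrow> 'r::comm_ring_1) \<Rightarrow> nat \<Rightarrow> 'a tensn \<Rightarrow>
                          (nat \<Rightarrow> nat) \<Rightarrow> (nat \<Rightarrow> nat) \<Rightarrow> 'r" where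
  "tens_eval \<rho> n X p r = (\<Sum>(c, x)\<leftarrow>X. of_int c * (\<Prod>q\<in>{1..n}. \<rho> (x q) (p q) (r q)))"

end

theory Submission
  imports Defs
begin


lemma sl_concat: "sum_list (concat xss) = sum_list (map sum_list (xss::'r::monoid_add list list))"
  by (induction xss) auto

lemma PL_gen:
  fixes f :: "nat \<Rightarrow> 'b \<Rightarrow> 'r::comm_semiring_1"
  shows "(\<Prod>q<length Ls. sum_list (map (f q) (Ls!q))) =
         sum_list (map (\<lambda>ts. \<Prod>q<length Ls. f q (ts!q)) (product_lists Ls))"
proof (induction Ls arbitrary: f)
  case Nil
  then show ?case by simp
next
  case (Cons l Ls)
  have "(\<Prod>q<length (l#Ls). sum_list (map (f q) ((l#Ls)!q))) =
        sum_list (map (f 0) l) * (\<Prod>q<length Ls. sum_list (map (f (Suc q)) (Ls!q)))"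
    by (simp only: length_Cons prod.lessThan_Suc_shift) simp
  also have "\<dots> = sum_list (map (f 0) l) * sum_list (map (\<lambda>ts. \<Prod>q<length Ls. f (Suc q) (ts!q)) (product_lists Ls))"
    using Cons.IH[of "\<lambda>q. f (Suc q)"] by simp
  also have "\<dots> = (\<Sum>x\<leftarrow>l. f 0 x * (\<Sum>ts\<leftarrow>product_lists Ls. \<Prod>q<length Ls. f (Suc q) (ts!q)))"
    by (rule sum_list_mult_const[symmetric])
  also have "\<dots> = (\<Sum>x\<leftarrow>l. (\<Sum>ts\<leftarrow>product_lists Ls. f 0 x * (\<Prod>q<length Ls. f (Suc q) (ts!q))))"
    by (simp only: sum_list_const_mult)
  also have "\<dots> = sum_list (map (\<lambda>ts. \<Prod>q<length (l#Ls). f q (ts!q)) (product_lists (l#Ls)))"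
    by (simp only: length_Cons prod.lessThan_Suc_shift product_lists.simps map_concat sl_concat map_map
         comp_def nth_Cons_0 nth_Cons_Suc)
  finally show ?case .
qed

lemma PL_n:
  fixes h :: "nat \<Rightarrow> 'b \<Rightarrow> 'r::comm_semiring_1"
  shows "(\<Prod>q\<in>{1..n}. sum_list (map (h q) (L q))) =
         sum_list (map (\<lambda>ts. \<Prod>q\<in>{1..n}. h q (ts!(q-1))) (product_lists (map L [1..<n+1])))"
proof -
  define Ls where "Ls = map L [1..<n+1]"
  have len: "length Ls = n" by (simp add: Ls_def)
  have "(\<Prod>q\<in>{1..n}. sum_list (map (h q) (L q))) = (\<Prod>q<n. sum_list (map (h (Suc q)) (L (Suc q))))"
    by (simp add: prod.atLeast1_atMost_eq)
  also have "\<dots> = (\<Prod>q<length Ls. sum_list (map (h (Suc q)) (Ls!q)))"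
    unfolding len by (rule prod.cong) (auto simp: Ls_def nth_map simp del: upt_Suc)
  also have "\<dots> = sum_list (map (\<lambda>ts. \<Prod>q<length Ls. h (Suc q) (ts!q)) (product_lists Ls))"
    by (rule PL_gen)
  also have "\<dots> = sum_list (map (\<lambda>ts. \<Prod>q\<in>{1..n}. h q (ts!(q-1))) (product_lists Ls))"
    unfolding len by (simp add: prod.atLeast1_atMost_eq)
  finally show ?thesis unfolding Ls_def .
qed

lemma cyc_pow:
  assumes "1 \<le> n"
  shows "(cyc n ^^ i) q = (if q \<in> {1..n} then (q - 1 + i) mod n + 1 else q)"
proof (induction i)
  case 0
  then show ?case by auto
next
  case (Suc i)
  show ?case
  proof (cases "q \<in> {1..n}")
    case True
    then obtain k where k: "q = Suc k" "k < n" by (cases q) auto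
    have m: "(k + i) mod n < n" using assms by simp
    have "(cyc n ^^ Suc i) q = cyc n ((cyc n ^^ i) q)" by simp
    also have "\<dots> = cyc n (Suc ((k+i) mod n))" using Suc True k by simp
    also have "\<dots> = Suc (Suc (k+i) mod n)"
    proof (cases "Suc ((k+i) mod n) < n")
      case True
      then show ?thesis using assms by (simp add: cyc_def mod_Suc)
    next
      case False
      then have "Suc ((k+i) mod n) = n" using m by linarith
      then show ?thesis using assms by (simp add: cyc_def mod_Suc)
    qed
    finally show ?thesis using True k by simp
  next
    case False
    have "(cyc n ^^ Suc i) q = cyc n ((cyc n ^^ i) q)" by simp
    also have "\<dots> = cyc n q" using Suc False by (metis (full_types))
    also have "\<dots> = q" using False unfolding cyc_def by auto
    finally show ?thesis using False by auto
  qed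
qed


lemma cyc_1: "cyc (Suc 0) = id" by (auto simp: cyc_def fun_eq_iff)

lemma cyc_Suc: "1 \<le> m \<Longrightarrow> cyc (Suc m) = cyc m \<circ> Transposition.transpose m (Suc m)"
  by (auto simp: cyc_def fun_eq_iff transpose_def)

lemma cyc_perm_sign: "1 \<le> n \<Longrightarrow> cyc n permutes {1..n} \<and> sign (cyc n) = (-1)^(n-1)"
proof (induction n rule: nat_induct_at_least)
  case base
  then show ?case by (simp add: cyc_1 permutes_id id_def)
next
  case (Suc m)
  have p1: "cyc m permutes {1..Suc m}" using Suc by (auto intro: permutes_subset)
  have p2: "Transposition.transpose m (Suc m) permutes {1..Suc m}" using Suc.hyps
    by (intro permutes_swap_id) auto
  have "cyc (Suc m) permutes {1..Suc m}" unfolding cyc_Suc[OF Suc.hyps]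
    by (rule permutes_compose[OF p2 p1])
  moreover have "sign (cyc (Suc m)) = (-1)^(Suc m - 1)"
  proof -
    have pp1: "permutation (cyc m)" using p1 permutation_permutes by blast
    have pp2: "permutation (Transposition.transpose m (Suc m))" using p2 permutation_permutes by blast
    have "sign (cyc (Suc m)) = sign (cyc m) * sign (Transposition.transpose m (Suc m))"
      unfolding cyc_Suc[OF Suc.hyps] by (rule sign_compose[OF pp1 pp2])
    also have "\<dots> = (-1)^(m-1) * (-1)" using Suc by (simp add: sign_swap_id)
    also have "\<dots> = (-1)^(Suc m - 1)" using Suc.hyps by (cases m) auto
    finally show ?thesis .
  qed
  ultimately show ?case by blast
qed

lemma cyc_pow_perm_sign:
  assumes "1 \<le> n"
  shows "(cyc n ^^ i) permutes {1..n} \<and> sign (cyc n ^^ i) = (-1)^((n-1)*i)"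
proof (induction i)
  case 0
  then show ?case using permutes_id[of "{1..n}"] by (simp add: id_def)
next
  case (Suc i)
  have c: "cyc n permutes {1..n}" "sign (cyc n) = (-1)^(n-1)" using cyc_perm_sign[OF assms] by auto
  have "(cyc n ^^ Suc i) = cyc n \<circ> (cyc n ^^ i)" by simp
  moreover have "cyc n \<circ> (cyc n ^^ i) permutes {1..n}" using Suc c by (intro permutes_compose) auto
  moreover have "sign (cyc n \<circ> (cyc n ^^ i)) = (-1)^((n-1)*Suc i)"
  proof -
    have "permutation (cyc n)" "permutation (cyc n ^^ i)"
      using c Suc permutation_permutes by blast+
    then have "sign (cyc n \<circ> (cyc n ^^ i)) = sign (cyc n) * sign (cyc n ^^ i)" by (rule sign_compose)
    also have "\<dots> = (-1)^((n-1)*Suc i)" using c Suc by (simp add: power_add power_mult_distrib mult.commute power_mult)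
    finally show ?thesis .
  qed
  ultimately show ?case by (metis funpow.simps(2))
qed

definition prv :: "nat \<Rightarrow> nat \<Rightarrow> nat" where "prv n q = (if q = 1 then n else q - 1)"

lemma prv_bij: "1 \<le> n \<Longrightarrow> bij_betw (prv n) {1..n} {1..n}"
  by (rule bij_betw_byWitness[where f' = "\<lambda>k. if k = n then 1 else k+1"]) (auto simp: prv_def)

lemma cyc_prv: "q \<in> {1..n} \<Longrightarrow> cyc n (prv n q) = q"
  by (auto simp: cyc_def prv_def)

lemma prv_cyc: "q \<in> {1..n} \<Longrightarrow> prv n (cyc n q) = q"
  by (auto simp: cyc_def prv_def)

lemma prv_in: "q \<in> {1..n} \<Longrightarrow> prv n q \<in> {1..n}"
  by (auto simp: prv_def)

lemma cycpow_prv: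
  assumes "1 \<le> n" "q \<in> {1..n}"
  shows "(cyc n ^^ i) (prv n q) = prv n ((cyc n ^^ i) q)"
proof -
  have P: "(cyc n ^^ i) permutes {1..n}" using cyc_pow_perm_sign[OF assms(1)] by blast
  have x: "(cyc n ^^ i) (prv n q) \<in> {1..n}" using permutes_in_image[OF P] prv_in[OF assms(2)] by blast
  have "(cyc n ^^ i) q = (cyc n ^^ i) (cyc n (prv n q))" using cyc_prv[OF assms(2)] by simp
  also have "\<dots> = cyc n ((cyc n ^^ i) (prv n q))" by (simp add: funpow_swap1)
  finally have "prv n ((cyc n ^^ i) q) = prv n (cyc n ((cyc n ^^ i) (prv n q)))" by simp
  also have "\<dots> = (cyc n ^^ i) (prv n q)" using prv_cyc[OF x] .
  finally show ?thesis by simp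
qed


lemma link_sum:
  fixes \<rho> :: "'a::ring_1 \<Rightarrow> nat \<Rightarrow> nat \<Rightarrow> 'r::comm_ring_1"
  assumes mult: "\<And>x y i l. i\<in>{1..N} \<Longrightarrow> l\<in>{1..N} \<Longrightarrow> \<rho> (x*y) i l = (\<Sum>m\<in>{1..N}. \<rho> x i m * \<rho> y m l)"
    and n: "1 \<le> n"
    and U: "\<And>q. q \<in> {1..n} \<Longrightarrow> U q \<in> {1..N}"
    and V: "\<And>q. q \<in> {1..n} \<Longrightarrow> V q \<in> {1..N}"
  shows "(\<Sum>I\<in>{I \<in> {0..n} \<rightarrow>\<^sub>E {1..N}. I 0 = I n}.
            \<Prod>q\<in>{1..n}. \<rho> (X q) (U q) (I q) * \<rho> (Y q) (I (q-1)) (V q))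
       = (\<Prod>q\<in>{1..n}. \<rho> (X (prv n q) * Y q) (U (prv n q)) (V q))"
proof -
  define h where "h J = (\<Prod>q\<in>{1..n}. \<rho> (X (prv n q)) (U (prv n q)) (J q) * \<rho> (Y q) (J q) (V q))" for J
  have eq: "(\<Sum>I\<in>{I \<in> {0..n} \<rightarrow>\<^sub>E {1..N}. I 0 = I n}.
            \<Prod>q\<in>{1..n}. \<rho> (X q) (U q) (I q) * \<rho> (Y q) (I (q-1)) (V q)) = (\<Sum>J\<in>{1..n} \<rightarrow>\<^sub>E {1..N}. h J)"
  proof (rule sum.reindex_bij_witness[where j = "\<lambda>I. \<lambda>q. if q \<in> {1..n} then I (q-1) else undefined"
        and i = "\<lambda>J. \<lambda>k. if k \<le> n then J (if k < n then k+1 else 1) else undefined"])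
    fix I assume I: "I \<in> {I \<in> {0..n} \<rightarrow>\<^sub>E {1..N}. I 0 = I n}"
    show "(\<lambda>k. if k \<le> n then (\<lambda>q. if q \<in> {1..n} then I (q - 1) else undefined) (if k < n then k + 1 else 1)
             else undefined) = I"
    proof
      fix k show "(if k \<le> n then (\<lambda>q. if q \<in> {1..n} then I (q - 1) else undefined) (if k < n then k + 1 else 1)
             else undefined) = I k"
        using I n by (auto simp: PiE_def extensional_def)
    qed
    show "(\<lambda>q. if q \<in> {1..n} then I (q - 1) else undefined) \<in> {1..n} \<rightarrow>\<^sub>E {1..N}"
      using I by (auto simp: PiE_def Pi_def extensional_def)
    have "h (\<lambda>q. if q \<in> {1..n} then I (q - 1) else undefined)
        = (\<Prod>q\<in>{1..n}. \<rho> (X (prv n q)) (U (prv n q)) (I (prv n q)) * \<rho> (Y q) (I (q-1)) (V q))"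
      unfolding h_def by (rule prod.cong) (use I in \<open>auto simp: prv_def\<close>)
    also have "\<dots> = (\<Prod>q\<in>{1..n}. \<rho> (X (prv n q)) (U (prv n q)) (I (prv n q))) * (\<Prod>q\<in>{1..n}. \<rho> (Y q) (I (q-1)) (V q))"
      by (rule prod.distrib)
    also have "(\<Prod>q\<in>{1..n}. \<rho> (X (prv n q)) (U (prv n q)) (I (prv n q))) = (\<Prod>q\<in>{1..n}. \<rho> (X q) (U q) (I q))"
      using prod.reindex_bij_betw[OF prv_bij[OF n], of "\<lambda>q. \<rho> (X q) (U q) (I q)"] .
    also have "(\<Prod>q\<in>{1..n}. \<rho> (X q) (U q) (I q)) * (\<Prod>q\<in>{1..n}. \<rho> (Y q) (I (q-1)) (V q))
       = (\<Prod>q\<in>{1..n}. \<rho> (X q) (U q) (I q) * \<rho> (Y q) (I (q-1)) (V q))"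
      by (rule prod.distrib[symmetric])
    finally show "h (\<lambda>q. if q \<in> {1..n} then I (q - 1) else undefined) = (\<Prod>q\<in>{1..n}. \<rho> (X q) (U q) (I q) * \<rho> (Y q) (I (q-1)) (V q))" .
  next
    fix J assume J: "J \<in> {1..n} \<rightarrow>\<^sub>E {1..N}"
    show "(\<lambda>q. if q \<in> {1..n} then (\<lambda>k. if k \<le> n then J (if k < n then k + 1 else 1) else undefined) (q - 1) else undefined) = J"
    proof
      fix q show "(if q \<in> {1..n} then (\<lambda>k. if k \<le> n then J (if k < n then k + 1 else 1) else undefined) (q - 1) else undefined) = J q"
        using J n by (auto simp: PiE_def extensional_def)
    qed
    show "(\<lambda>k. if k \<le> n then J (if k < n then k + 1 else 1) else undefined) \<in> {I \<in> {0..n} \<rightarrow>\<^sub>E {1..N}. I 0 = I n}"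
      using J n by (auto simp: PiE_def Pi_def extensional_def)
  qed
  have "(\<Prod>q\<in>{1..n}. \<rho> (X (prv n q) * Y q) (U (prv n q)) (V q))
      = (\<Prod>q\<in>{1..n}. \<Sum>m\<in>{1..N}. \<rho> (X (prv n q)) (U (prv n q)) m * \<rho> (Y q) m (V q))"
  proof (rule prod.cong[OF refl])
    fix q assume q: "q \<in> {1..n}"
    show "\<rho> (X (prv n q) * Y q) (U (prv n q)) (V q) = (\<Sum>m\<in>{1..N}. \<rho> (X (prv n q)) (U (prv n q)) m * \<rho> (Y q) m (V q))"
      by (rule mult[OF U[OF prv_in[OF q]] V[OF q]])
  qed
  also have "\<dots> = (\<Sum>J\<in>{1..n} \<rightarrow>\<^sub>E {1..N}. h J)"
    unfolding h_def by (rule prod_sum_PiE) auto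
  also note eq[symmetric]
  finally show ?thesis by simp
qed


definition Fts :: "nat \<Rightarrow> ('a::ring_1 \<times> 'a) list \<Rightarrow> nat \<Rightarrow> 'a" where
  "Fts n ts q = (if q = 1 then fst (ts ! (n - 1)) * snd (ts ! 0) else fst (ts ! (q - 2)) * snd (ts ! (q - 1)))"

lemma sum_sum_list_swap:
  "(\<Sum>I\<in>S. sum_list (map (g I) xs)) = sum_list (map (\<lambda>t. \<Sum>I\<in>S. g I t) xs)"
  by (induction xs) (auto simp: sum.distrib)

lemma T_eq:
  fixes \<rho> :: "'a::ring_1 \<Rightarrow> nat \<Rightarrow> nat \<Rightarrow> 'r::comm_ring_1"
  assumes mult: "\<And>x y i l. i\<in>{1..N} \<Longrightarrow> l\<in>{1..N} \<Longrightarrow> \<rho> (x*y) i l = (\<Sum>m\<in>{1..N}. \<rho> x i m * \<rho> y m l)"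
    and n: "1 \<le> n"
    and U: "\<And>q. q \<in> {1..n} \<Longrightarrow> U q \<in> {1..N}"
    and V: "\<And>q. q \<in> {1..n} \<Longrightarrow> V q \<in> {1..N}"
  shows "(\<Sum>I\<in>{I \<in> {0..n} \<rightarrow>\<^sub>E {1..N}. I 0 = I n}.
            \<Prod>q\<in>{1..n}. vf \<rho> (ds q) (I (q-1)) (I q) (b q) (U q) (V q))
       = sum_list (map (\<lambda>ts. \<Prod>q\<in>{1..n}. \<rho> (Fts n ts q) (U (prv n q)) (V q))
             (product_lists (map (\<lambda>q. ds q (b q)) [1..<n+1])))"
proof -
  define PL where "PL = product_lists (map (\<lambda>q. ds q (b q)) [1..<n+1])"
  define Iset where "Iset = {I \<in> {0..n} \<rightarrow>\<^sub>E {1..N}. I 0 = I n}"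
  have e1: "(\<Prod>q\<in>{1..n}. vf \<rho> (ds q) (I (q-1)) (I q) (b q) (U q) (V q))
      = sum_list (map (\<lambda>ts. \<Prod>q\<in>{1..n}. \<rho> (fst (ts!(q-1))) (U q) (I q) * \<rho> (snd (ts!(q-1))) (I (q-1)) (V q)) PL)" for I
  proof -
    have "(\<Prod>q\<in>{1..n}. vf \<rho> (ds q) (I (q-1)) (I q) (b q) (U q) (V q))
       = (\<Prod>q\<in>{1..n}. sum_list (map (\<lambda>z. \<rho> (fst z) (U q) (I q) * \<rho> (snd z) (I (q-1)) (V q)) (ds q (b q))))"
      unfolding vf_def by (simp add: split_def)
    also have "\<dots> = sum_list (map (\<lambda>ts. \<Prod>q\<in>{1..n}. \<rho> (fst (ts!(q-1))) (U q) (I q) * \<rho> (snd (ts!(q-1))) (I (q-1)) (V q)) PL)"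
      unfolding PL_def by (rule PL_n)
    finally show ?thesis .
  qed
  have e2: "(\<Sum>I\<in>Iset. \<Prod>q\<in>{1..n}. \<rho> (fst (ts!(q-1))) (U q) (I q) * \<rho> (snd (ts!(q-1))) (I (q-1)) (V q))
      = (\<Prod>q\<in>{1..n}. \<rho> (Fts n ts q) (U (prv n q)) (V q))" for ts
  proof -
    have "(\<Sum>I\<in>Iset. \<Prod>q\<in>{1..n}. \<rho> (fst (ts!(q-1))) (U q) (I q) * \<rho> (snd (ts!(q-1))) (I (q-1)) (V q))
        = (\<Prod>q\<in>{1..n}. \<rho> (fst (ts!(prv n q - 1)) * snd (ts!(q-1))) (U (prv n q)) (V q))"
      unfolding Iset_def
      by (rule link_sum[where \<rho>=\<rho> and N=N and U=U and V=V and n=n, OF mult n U V])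
    also have "\<dots> = (\<Prod>q\<in>{1..n}. \<rho> (Fts n ts q) (U (prv n q)) (V q))"
      by (rule prod.cong) (auto simp: Fts_def prv_def numeral_2_eq_2)
    finally show ?thesis .
  qed
  show ?thesis
    unfolding PL_def[symmetric] Iset_def[symmetric]
    by (simp only: e1 sum_sum_list_swap e2)
qed


lemma R_eq:
  fixes \<rho> :: "'a::ring_1 \<Rightarrow> nat \<Rightarrow> nat \<Rightarrow> 'r::comm_ring_1"
  assumes p: "\<pi> permutes {1..n}"
  shows "tens_eval \<rho> n (tau \<pi> (bracket_tilde n ds (tau_args (inv \<pi>) b))) P Rr
       = sum_list (map (\<lambda>ts. \<Prod>q\<in>{1..n}. \<rho> (Fts n ts q) (P (\<pi> q)) (Rr (\<pi> q)))
             (product_lists (map (\<lambda>q. ds q (b (\<pi> q))) [1..<n+1])))"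
proof -
  have bij: "bij \<pi>" using p by (rule permutes_bij)
  define PL where "PL = product_lists (map (\<lambda>q. ds q (b (\<pi> q))) [1..<n+1])"
  have "tens_eval \<rho> n (tau \<pi> (bracket_tilde n ds (tau_args (inv \<pi>) b))) P Rr
      = sum_list (map (\<lambda>ts. \<Prod>q\<in>{1..n}. \<rho> (Fts n ts (inv \<pi> q)) (P q) (Rr q)) PL)"
    by (simp add: tens_eval_def tau_def tau_args_def bracket_tilde_def inv_inv_eq[OF bij] Fts_def comp_def PL_def)
  also have "\<dots> = sum_list (map (\<lambda>ts. \<Prod>q\<in>{1..n}. \<rho> (Fts n ts q) (P (\<pi> q)) (Rr (\<pi> q))) PL)"
  proof (rule arg_cong[where f=sum_list], rule map_cong[OF refl])
    fix ts
    have "(\<Prod>q\<in>{1..n}. \<rho> (Fts n ts (inv \<pi> (\<pi> q))) (P (\<pi> q)) (Rr (\<pi> q)))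
        = (\<Prod>q\<in>{1..n}. \<rho> (Fts n ts (inv \<pi> q)) (P q) (Rr q))"
      by (rule prod.reindex_bij_betw[OF permutes_imp_bij[OF p]])
    then show "(\<Prod>q\<in>{1..n}. \<rho> (Fts n ts (inv \<pi> q)) (P q) (Rr q))
        = (\<Prod>q\<in>{1..n}. \<rho> (Fts n ts q) (P (\<pi> q)) (Rr (\<pi> q)))"
      using permutes_inverses(2)[OF p] by simp
  qed
  finally show ?thesis unfolding PL_def .
qed




lemma mod_arith: "i < (n::nat) \<Longrightarrow> j < n \<Longrightarrow> (n - i + j) mod n = 0 \<Longrightarrow> i = j"
proof (cases "j < i")
  case True
  assume a: "i < n" "j < n" "(n - i + j) mod n = 0"
  have "n - i + j < n" "0 < n - i + j" using True a by auto
  then show ?thesis using a(3) by simp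
next
  case False
  assume a: "i < n" "j < n" "(n - i + j) mod n = 0"
  have "n - i + j = n + (j - i)" using False a by auto
  then have "(n - i + j) mod n = (n + (j - i)) mod n" by simp
  also have "\<dots> = (j - i) mod n" by (rule mod_add_self1)
  also have "\<dots> = j - i" using a by simp
  finally have "(n - i + j) mod n = j - i" .
  then show ?thesis using a False by simp
qed

lemma perm_bij:
  assumes n: "1 \<le> n"
  shows "inj_on (\<lambda>(\<sigma>,i). \<sigma> \<circ> (cyc n ^^ i)) ({\<sigma>. \<sigma> permutes {2..n}} \<times> {..<n})"
    and "(\<lambda>(\<sigma>,i). \<sigma> \<circ> (cyc n ^^ i)) ` ({\<sigma>. \<sigma> permutes {2..n}} \<times> {..<n}) = {\<tau>. \<tau> permutes {1..n}}"
proof -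
  show inj: "inj_on (\<lambda>(\<sigma>,i). \<sigma> \<circ> (cyc n ^^ i)) ({\<sigma>. \<sigma> permutes {2..n}} \<times> {..<n})"
  proof (rule inj_onI, clarify)
    fix \<sigma> i \<sigma>' j
    assume s: "\<sigma> permutes {2..n}" and i: "i < n" and s': "\<sigma>' permutes {2..n}" and j: "j < n"
      and eq: "\<sigma> \<circ> (cyc n ^^ i) = \<sigma>' \<circ> (cyc n ^^ j)"
    define q0 where "q0 = (n - i) mod n + 1"
    have "(n - i) mod n < n" using n by simp
    then have q0: "q0 \<in> {1..n}" by (auto simp: q0_def)
    have "(cyc n ^^ i) q0 = ((n - i) mod n + i) mod n + 1" using cyc_pow[OF n, of i q0] q0 by (simp add: q0_def)
    also have "\<dots> = 1" using i by (simp add: mod_add_left_eq)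
    finally have ci: "(cyc n ^^ i) q0 = 1" .
    have "(cyc n ^^ j) q0 = ((n - i) mod n + j) mod n + 1" using cyc_pow[OF n, of j q0] q0 by (simp add: q0_def)
    also have "\<dots> = (n - i + j) mod n + 1" by (simp add: mod_add_left_eq)
    finally have cj: "(cyc n ^^ j) q0 = (n - i + j) mod n + 1" .
    have s1: "\<sigma> 1 = 1" using permutes_not_in[OF s] by simp
    have s'1: "\<sigma>' 1 = 1" using permutes_not_in[OF s'] by simp
    have "\<sigma>' ((cyc n ^^ j) q0) = \<sigma> ((cyc n ^^ i) q0)" using fun_cong[OF eq, of q0] by simp
    also have "\<dots> = \<sigma>' 1" using ci s1 s'1 by simp
    finally have "(cyc n ^^ j) q0 = 1" using permutes_inj[OF s'] by (simp add: inj_eq)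
    then have "(n - i + j) mod n = 0" using cj by simp
    then have ij: "i = j" by (rule mod_arith[OF i j])
    have "\<sigma> = \<sigma>'"
    proof
      fix x
      have P: "(cyc n ^^ i) permutes {1..n}" using cyc_pow_perm_sign[OF n] by blast
      obtain y where y: "x = (cyc n ^^ i) y" using permutes_surj[OF P] by (metis surjD)
      show "\<sigma> x = \<sigma>' x" using fun_cong[OF eq, of y] ij y by simp
    qed
    then show "\<sigma> = \<sigma>' \<and> i = j" using ij by simp
  qed
  have sub: "(\<lambda>(\<sigma>,i). \<sigma> \<circ> (cyc n ^^ i)) ` ({\<sigma>. \<sigma> permutes {2..n}} \<times> {..<n}) \<subseteq> {\<tau>. \<tau> permutes {1..n}}"
  proof clarify
    fix \<sigma> i assume s: "\<sigma> permutes {2..n}"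
    have "\<sigma> permutes {1..n}" using s by (rule permutes_subset) auto
    moreover have "(cyc n ^^ i) permutes {1..n}" using cyc_pow_perm_sign[OF n] by blast
    ultimately show "\<sigma> \<circ> (cyc n ^^ i) permutes {1..n}" by (rule permutes_compose[rotated])
  qed
  have c1: "card ({\<sigma>. \<sigma> permutes {2..n}} \<times> {..<n}) = fact n"
  proof -
    have "card {\<sigma>. \<sigma> permutes {2..n}} = fact (n - 1)" by (rule card_permutations) auto
    then have "card ({\<sigma>. \<sigma> permutes {2..n}} \<times> {..<n}) = fact (n-1) * n" by (simp add: card_cartesian_product)
    also have "\<dots> = fact n" using n by (cases n) (auto simp: algebra_simps)
    finally show ?thesis .
  qed
  have c2: "card {\<tau>. \<tau> permutes {1..n}} = fact n" by (rule card_permutations) auto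
  show "(\<lambda>(\<sigma>,i). \<sigma> \<circ> (cyc n ^^ i)) ` ({\<sigma>. \<sigma> permutes {2..n}} \<times> {..<n}) = {\<tau>. \<tau> permutes {1..n}}"
  proof (rule card_subset_eq[OF finite_permutations[OF finite_atLeastAtMost] sub])
    show "card ((\<lambda>(\<sigma>,i). \<sigma> \<circ> (cyc n ^^ i)) ` ({\<sigma>. \<sigma> permutes {2..n}} \<times> {..<n})) = card {\<tau>. \<tau> permutes {1..n}}"
      using card_image[OF inj] c1 c2 by simp
  qed
qed



lemma te_concat: "tens_eval \<rho> n (concat xss) P R = sum_list (map (\<lambda>X. tens_eval \<rho> n X P R) xss)"
  by (induction xss) (auto simp: tens_eval_def)

lemma te_scale: "tens_eval \<rho> n (map (\<lambda>(c, x). (s * c, x)) X) P R = of_int s * tens_eval \<rho> n X P R"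
  by (induction X) (auto simp: tens_eval_def algebra_simps)

lemma te_bracket_mono:
  "tens_eval \<rho> n (bracket_mono n ds b) P R =
   (\<Sum>i<n. of_int ((-1) ^ ((n - 1) * i)) *
       tens_eval \<rho> n (tau (cyc n ^^ i) (bracket_tilde n ds (tau_args (inv (cyc n ^^ i)) b))) P R)"
proof -
  have "tens_eval \<rho> n (bracket_mono n ds b) P R =
     sum_list (map (\<lambda>i. of_int ((-1) ^ ((n - 1) * i)) *
       tens_eval \<rho> n (tau (cyc n ^^ i) (bracket_tilde n ds (tau_args (inv (cyc n ^^ i)) b))) P R) [0..<n])"
    unfolding bracket_mono_def te_concat map_map comp_def te_scale ..
  also have "\<dots> = (\<Sum>i<n. of_int ((-1) ^ ((n - 1) * i)) *
       tens_eval \<rho> n (tau (cyc n ^^ i) (bracket_tilde n ds (tau_args (inv (cyc n ^^ i)) b))) P R)"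
    by (simp add: sum_set_upt_conv_sum_list_nat[symmetric] atLeast0LessThan)
  finally show ?thesis .
qed

lemma mono_eq:
  fixes \<rho> :: "'a::ring_1 \<Rightarrow> nat \<Rightarrow> nat \<Rightarrow> 'r::comm_ring_1"
  assumes mult: "\<And>x y i l. i\<in>{1..N} \<Longrightarrow> l\<in>{1..N} \<Longrightarrow> \<rho> (x*y) i l = (\<Sum>m\<in>{1..N}. \<rho> x i m * \<rho> y m l)"
    and n: "1 \<le> n"
    and uv: "\<forall>q\<in>{1..n}. u q \<in> {1..N} \<and> v q \<in> {1..N}"
  shows "trX_eval_mono \<rho> N n ds a u v =
         (\<Sum>\<sigma>\<in>{\<sigma>. \<sigma> permutes {2..n}}. of_int (sign \<sigma>) *
            tens_eval \<rho> n (bracket_mono n ds (\<lambda>q. a (\<sigma> q)))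
              (\<lambda>q. if q = 1 then u (\<sigma> n) else u (\<sigma> (q - 1))) (\<lambda>q. v (\<sigma> q)))"
proof -
  define Iset where "Iset = {I \<in> {0..n} \<rightarrow>\<^sub>E {1..N}. I 0 = I n}"
  define T where "T \<tau> = (\<Sum>I\<in>Iset. \<Prod>q\<in>{1..n}. vf \<rho> (ds q) (I (q-1)) (I q) (a (\<tau> q)) (u (\<tau> q)) (v (\<tau> q)))" for \<tau>
  define SL where "SL \<tau> = sum_list (map (\<lambda>ts. \<Prod>q\<in>{1..n}. \<rho> (Fts n ts q) (u (\<tau> (prv n q))) (v (\<tau> q)))
             (product_lists (map (\<lambda>q. ds q (a (\<tau> q))) [1..<n+1])))" for \<tau>
  define Pset where "Pset = {\<tau>. \<tau> permutes {1..n}}"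
  define Sset where "Sset = {\<sigma>. \<sigma> permutes {2..n}}"
  have L1: "trX_eval_mono \<rho> N n ds a u v = (\<Sum>\<tau>\<in>Pset. of_int (sign \<tau>) * T \<tau>)"
    unfolding trX_eval_mono_def T_def Iset_def Pset_def
    by (subst sum.swap) (simp add: sum_distrib_left)
  have L2: "T \<tau> = SL \<tau>" if t: "\<tau> \<in> Pset" for \<tau>
  proof -
    have tp: "\<tau> permutes {1..n}" using t by (simp add: Pset_def)
    have U: "u (\<tau> q) \<in> {1..N}" and V: "v (\<tau> q) \<in> {1..N}" if "q \<in> {1..n}" for q
      using uv permutes_in_image[OF tp] that by blast+
    show ?thesis unfolding T_def SL_def Iset_def
      by (rule T_eq[where \<rho>=\<rho> and N=N and n=n and U="\<lambda>q. u (\<tau> q)" and V="\<lambda>q. v (\<tau> q)", OF mult n U V])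
  qed
  have R2: "tens_eval \<rho> n (tau (cyc n ^^ i) (bracket_tilde n ds (tau_args (inv (cyc n ^^ i)) (\<lambda>q. a (\<sigma> q)))))
              (\<lambda>q. if q = 1 then u (\<sigma> n) else u (\<sigma> (q - 1))) (\<lambda>q. v (\<sigma> q))
           = SL (\<sigma> \<circ> (cyc n ^^ i))" for \<sigma> i
  proof -
    have P: "(cyc n ^^ i) permutes {1..n}" using cyc_pow_perm_sign[OF n] by blast
    have "tens_eval \<rho> n (tau (cyc n ^^ i) (bracket_tilde n ds (tau_args (inv (cyc n ^^ i)) (\<lambda>q. a (\<sigma> q)))))
              (\<lambda>q. if q = 1 then u (\<sigma> n) else u (\<sigma> (q - 1))) (\<lambda>q. v (\<sigma> q))
        = sum_list (map (\<lambda>ts. \<Prod>q\<in>{1..n}. \<rho> (Fts n ts q)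
             ((\<lambda>q. if q = 1 then u (\<sigma> n) else u (\<sigma> (q - 1))) ((cyc n ^^ i) q)) ((\<lambda>q. v (\<sigma> q)) ((cyc n ^^ i) q)))
             (product_lists (map (\<lambda>q. ds q ((\<lambda>q. a (\<sigma> q)) ((cyc n ^^ i) q))) [1..<n+1])))"
      by (rule R_eq[OF P])
    also have "\<dots> = SL (\<sigma> \<circ> (cyc n ^^ i))"
      unfolding SL_def
    proof (simp only: o_apply, rule arg_cong[where f=sum_list], rule map_cong[OF refl], rule prod.cong[OF refl])
      fix ts q assume q: "q \<in> {1..n}"
      have "(if (cyc n ^^ i) q = 1 then u (\<sigma> n) else u (\<sigma> ((cyc n ^^ i) q - 1))) = u (\<sigma> (prv n ((cyc n ^^ i) q)))"
        by (simp add: prv_def)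
      also have "\<dots> = u (\<sigma> ((cyc n ^^ i) (prv n q)))" using cycpow_prv[OF n q] by simp
      finally show "\<rho> (Fts n ts q) (if (cyc n ^^ i) q = 1 then u (\<sigma> n) else u (\<sigma> ((cyc n ^^ i) q - 1))) (v (\<sigma> ((cyc n ^^ i) q)))
          = \<rho> (Fts n ts q) (u (\<sigma> ((cyc n ^^ i) (prv n q)))) (v (\<sigma> ((cyc n ^^ i) q)))" by simp
    qed
    finally show ?thesis .
  qed
  have R3: "sign (\<sigma> \<circ> (cyc n ^^ i)) = sign \<sigma> * (-1) ^ ((n - 1) * i)" if s: "\<sigma> \<in> Sset" for \<sigma> i
  proof -
    have P: "(cyc n ^^ i) permutes {1..n}" "sign (cyc n ^^ i) = (-1)^((n-1)*i)" using cyc_pow_perm_sign[OF n] by blast+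
    have "permutation \<sigma>" using s unfolding Sset_def permutation_permutes by blast
    moreover have "permutation (cyc n ^^ i)" using P permutation_permutes by blast
    ultimately show ?thesis using sign_compose P(2) by metis
  qed
  define f where "f = (\<lambda>(\<sigma>::nat\<Rightarrow>nat, i::nat). \<sigma> \<circ> (cyc n ^^ i))"
  have "(\<Sum>\<sigma>\<in>Sset. of_int (sign \<sigma>) *
            tens_eval \<rho> n (bracket_mono n ds (\<lambda>q. a (\<sigma> q)))
              (\<lambda>q. if q = 1 then u (\<sigma> n) else u (\<sigma> (q - 1))) (\<lambda>q. v (\<sigma> q)))
      = (\<Sum>\<sigma>\<in>Sset. \<Sum>i<n. of_int (sign \<sigma>) * (of_int ((-1) ^ ((n - 1) * i)) * SL (\<sigma> \<circ> (cyc n ^^ i))))"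
    by (simp only: te_bracket_mono R2 sum_distrib_left)
  also have "\<dots> = (\<Sum>(\<sigma>,i)\<in>Sset \<times> {..<n}. of_int (sign \<sigma>) * (of_int ((-1) ^ ((n - 1) * i)) * SL (\<sigma> \<circ> (cyc n ^^ i))))"
    by (rule sum.cartesian_product)
  also have "\<dots> = (\<Sum>p\<in>Sset \<times> {..<n}. of_int (sign (f p)) * SL (f p))"
    by (rule sum.cong[OF refl]) (auto simp: f_def R3)
  also have "\<dots> = (\<Sum>\<tau>\<in>f ` (Sset \<times> {..<n}). of_int (sign \<tau>) * SL \<tau>)"
    using sum.reindex[OF perm_bij(1)[OF n], of "\<lambda>\<tau>. of_int (sign \<tau>) * SL \<tau>"]
    unfolding f_def Sset_def by simp
  also have "f ` (Sset \<times> {..<n}) = Pset" unfolding f_def Sset_def Pset_def by (rule perm_bij(2)[OF n])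
  also have "(\<Sum>\<tau>\<in>Pset. of_int (sign \<tau>) * SL \<tau>) = (\<Sum>\<tau>\<in>Pset. of_int (sign \<tau>) * T \<tau>)"
    using L2 by simp
  finally show ?thesis unfolding L1 Sset_def by simp
qed



theorem lemma5p2:
  fixes j :: "'k::field_char_0 \<Rightarrow> 'a::ring_1"
    and K :: nat and e :: "nat \<Rightarrow> 'a" and \<alpha> :: "nat \<Rightarrow> nat"
    and \<iota> :: "'k \<Rightarrow> 'r::comm_ring_1" and \<rho> :: "'a \<Rightarrow> nat \<Rightarrow> nat \<Rightarrow> 'r"
    and n :: nat and Q :: "(nat \<Rightarrow> ('a \<Rightarrow> ('a \<times> 'a) list)) list"
    and a :: "nat \<Rightarrow> 'a" and u v :: "nat \<Rightarrow> nat"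
  assumes "k_algebra j"
    and "idempotent_system K e"
    and "finitely_generated_over_B j K e"
    and "ring_hom_k \<iota>"
    and "is_rep j K e \<alpha> \<iota> \<rho>"
    and "1 \<le> n"
    and "\<forall>ds\<in>set Q. \<forall>q\<in>{1..n}. double_der j K e (ds q)"
    and "\<forall>q\<in>{1..n}. u q \<in> {1..(\<Sum>s\<in>{1..K}. \<alpha> s)} \<and> v q \<in> {1..(\<Sum>s\<in>{1..K}. \<alpha> s)}"
  shows "trX_eval \<rho> (\<Sum>s\<in>{1..K}. \<alpha> s) n Q a u v =
         (\<Sum>\<sigma>\<in>{\<sigma>. \<sigma> permutes {2..n}}.
            of_int (sign \<sigma>) *
            tens_eval \<rho> n (bracket n Q (\<lambda>q. a (\<sigma> q)))
              (\<lambda>q. if q = 1 then u (\<sigma> n) else u (\<sigma> (q - 1)))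
              (\<lambda>q. v (\<sigma> q)))"
proof -
  define N where "N = (\<Sum>s\<in>{1..K}. \<alpha> s)"
  have mult: "\<And>x y i l. i\<in>{1..N} \<Longrightarrow> l\<in>{1..N} \<Longrightarrow> \<rho> (x*y) i l = (\<Sum>m\<in>{1..N}. \<rho> x i m * \<rho> y m l)"
    using assms(5) unfolding is_rep_def Let_def N_def by blast
  have uv: "\<forall>q\<in>{1..n}. u q \<in> {1..N} \<and> v q \<in> {1..N}" using assms(8) unfolding N_def .
  define P where "P \<sigma> = (\<lambda>q. if q = 1 then u (\<sigma> n) else u (\<sigma> (q - 1)))" for \<sigma> :: "nat \<Rightarrow> nat"
  define R where "R \<sigma> = (\<lambda>q. v (\<sigma> q))" for \<sigma> :: "nat \<Rightarrow> nat"
  have "trX_eval \<rho> N n Q a u v = sum_list (map (\<lambda>ds. trX_eval_mono \<rho> N n ds a u v) Q)"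
    unfolding trX_eval_def ..
  also have "\<dots> = sum_list (map (\<lambda>ds. \<Sum>\<sigma>\<in>{\<sigma>. \<sigma> permutes {2..n}}. of_int (sign \<sigma>) *
            tens_eval \<rho> n (bracket_mono n ds (\<lambda>q. a (\<sigma> q))) (P \<sigma>) (R \<sigma>)) Q)"
    unfolding P_def R_def by (simp only: mono_eq[where \<rho>=\<rho> and N=N, OF mult assms(6) uv])
  also have "\<dots> = (\<Sum>\<sigma>\<in>{\<sigma>. \<sigma> permutes {2..n}}. sum_list (map (\<lambda>ds. of_int (sign \<sigma>) *
            tens_eval \<rho> n (bracket_mono n ds (\<lambda>q. a (\<sigma> q))) (P \<sigma>) (R \<sigma>)) Q))"
    by (rule sum_sum_list_swap[symmetric])
  also have "\<dots> = (\<Sum>\<sigma>\<in>{\<sigma>. \<sigma> permutes {2..n}}. of_int (sign \<sigma>) *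
            tens_eval \<rho> n (bracket n Q (\<lambda>q. a (\<sigma> q))) (P \<sigma>) (R \<sigma>))"
    by (simp only: bracket_def te_concat map_map comp_def sum_list_const_mult)
  finally show ?thesis unfolding N_def P_def R_def .
qed

end
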